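(* Let $M$ and $N$ be non-trivial $0$-left cancellative monoids with zero. Then their $0$-free product $M*_0N$ is $0$-left cancellative. Dually, if $M$ and $N$ are non-trivial $0$-right cancellative monoids, then $M*_0N$ is $0$-right cancellative.
   Context: A monoid with zero is non-trivial if $0\neq1$. $0$-left cancellative: $st=sr\neq0\Rightarrow t=r$; $0$-right cancellative: $ts=rs\neq0\Rightarrow t=r$. The $0$-free product $M*_0N$ is the coproduct of $M$ and $N$ in the category of monoids with zero and zero-preserving homomorphisms; equivalently it is the Rees quotient $(M*N)/I$ of the monoid free product $M*N$ by the ideal $I$ generated by the zeros of $M$ and $N$. *)

theory Defs
  imports "HOL-Algebra.Group"
begin

definition monoid0 :: "('a, 'm) monoid_scheme \<Rightarrow> 'a \<Rightarrow> bool" where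
  "monoid0 M z \<longleftrightarrow> monoid M \<and> z \<in> carrier M \<and>
     (\<forall>x\<in>carrier M. z \<otimes>\<^bsub>M\<^esub> x = z \<and> x \<otimes>\<^bsub>M\<^esub> z = z)"

definition nontrivial0 :: "('a, 'm) monoid_scheme \<Rightarrow> 'a \<Rightarrow> bool" where
  "nontrivial0 M z \<longleftrightarrow> z \<noteq> \<one>\<^bsub>M\<^esub>"

definition zero_left_cancel :: "('a, 'm) monoid_scheme \<Rightarrow> 'a \<Rightarrow> bool" where
  "zero_left_cancel M z \<longleftrightarrow>
     (\<forall>s\<in>carrier M. \<forall>t\<in>carrier M. \<forall>r\<in>carrier M.
        s \<otimes>\<^bsub>M\<^esub> t = s \<otimes>\<^bsub>M\<^esub> r \<and> s \<otimes>\<^bsub>M\<^esub> t \<noteq> z \<longrightarrow> t = r)"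

definition zero_right_cancel :: "('a, 'm) monoid_scheme \<Rightarrow> 'a \<Rightarrow> bool" where
  "zero_right_cancel M z \<longleftrightarrow>
     (\<forall>s\<in>carrier M. \<forall>t\<in>carrier M. \<forall>r\<in>carrier M.
        t \<otimes>\<^bsub>M\<^esub> s = r \<otimes>\<^bsub>M\<^esub> s \<and> t \<otimes>\<^bsub>M\<^esub> s \<noteq> z \<longrightarrow> t = r)"

text \<open>Elements of the 0-free product (the Rees quotient of the free product M*N by the
ideal generated by the two zeros) are represented by their normal forms:
\<open>None\<close> is the zero, and \<open>Some w\<close> is a reduced word, i.e. an alternating word whose
letters are non-identity, non-zero elements of M (tagged Inl) or of N (tagged Inr).\<close>

definition reduced_word ::
  "('a, 'm) monoid_scheme \<Rightarrow> 'a \<Rightarrow> ('b, 'n) monoid_scheme \<Rightarrow> 'b \<Rightarrow> ('a + 'b) list \<Rightarrow> bool" where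
  "reduced_word M zM N zN w \<longleftrightarrow>
     (\<forall>x\<in>set w. case x of
         Inl a \<Rightarrow> a \<in> carrier M \<and> a \<noteq> zM \<and> a \<noteq> \<one>\<^bsub>M\<^esub>
       | Inr b \<Rightarrow> b \<in> carrier N \<and> b \<noteq> zN \<and> b \<noteq> \<one>\<^bsub>N\<^esub>) \<and>
     (\<forall>i. Suc i < length w \<longrightarrow> isl (w ! i) \<noteq> isl (w ! Suc i))"

definition push_letter ::
  "('a, 'm) monoid_scheme \<Rightarrow> 'a \<Rightarrow> ('b, 'n) monoid_scheme \<Rightarrow> 'b \<Rightarrow>
   'a + 'b \<Rightarrow> ('a + 'b) list option \<Rightarrow> ('a + 'b) list option" where
  "push_letter M zM N zN x u =
     (case u of
        None \<Rightarrow> None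
      | Some [] \<Rightarrow> Some [x]
      | Some (y # w) \<Rightarrow>
          (case (x, y) of
             (Inl a, Inl b) \<Rightarrow>
               (let c = a \<otimes>\<^bsub>M\<^esub> b in
                  if c = zM then None else if c = \<one>\<^bsub>M\<^esub> then Some w else Some (Inl c # w))
           | (Inr a, Inr b) \<Rightarrow>
               (let c = a \<otimes>\<^bsub>N\<^esub> b in
                  if c = zN then None else if c = \<one>\<^bsub>N\<^esub> then Some w else Some (Inr c # w))
           | _ \<Rightarrow> Some (x # y # w)))"

definition free_prod0_mult ::
  "('a, 'm) monoid_scheme \<Rightarrow> 'a \<Rightarrow> ('b, 'n) monoid_scheme \<Rightarrow> 'b \<Rightarrow>
   ('a + 'b) list option \<Rightarrow> ('a + 'b) list option \<Rightarrow> ('a + 'b) list option" where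
  "free_prod0_mult M zM N zN u v =
     (case u of None \<Rightarrow> None | Some w \<Rightarrow> foldr (push_letter M zM N zN) w v)"

definition free_prod0 ::
  "('a, 'm) monoid_scheme \<Rightarrow> 'a \<Rightarrow> ('b, 'n) monoid_scheme \<Rightarrow> 'b \<Rightarrow>
   ('a + 'b) list option monoid" where
  "free_prod0 M zM N zN =
     \<lparr> carrier = insert None (Some ` {w. reduced_word M zM N zN w}),
       mult = free_prod0_mult M zM N zN,
       one = Some [] \<rparr>"

end

theory Submission
  imports Defs
begin

locale fp0 =
  fixes M :: "('a, 'm) monoid_scheme" and zM :: 'a and N :: "('b, 'n) monoid_scheme" and zN :: 'b
  assumes M0: "monoid0 M zM" and N0: "monoid0 N zN"
    and ntM: "nontrivial0 M zM" and ntN: "nontrivial0 N zN"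
begin

lemma mM: "monoid M" and mN: "monoid N" and zMc: "zM \<in> carrier M" and zNc: "zN \<in> carrier N"
  and zMl: "\<And>x. x \<in> carrier M \<Longrightarrow> zM \<otimes>\<^bsub>M\<^esub> x = zM"
  and zMr: "\<And>x. x \<in> carrier M \<Longrightarrow> x \<otimes>\<^bsub>M\<^esub> zM = zM"
  and zNl: "\<And>x. x \<in> carrier N \<Longrightarrow> zN \<otimes>\<^bsub>N\<^esub> x = zN"
  and zNr: "\<And>x. x \<in> carrier N \<Longrightarrow> x \<otimes>\<^bsub>N\<^esub> zN = zN"
  and zM1: "zM \<noteq> \<one>\<^bsub>M\<^esub>" and zN1: "zN \<noteq> \<one>\<^bsub>N\<^esub>"
  using M0 N0 ntM ntN by (auto simp: monoid0_def nontrivial0_def)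

abbreviation "push \<equiv> push_letter M zM N zN"
abbreviation "fm \<equiv> free_prod0_mult M zM N zN"
abbreviation "rw \<equiv> reduced_word M zM N zN"

definition vl :: "'a + 'b \<Rightarrow> bool" where
  "vl z = (case z of Inl a \<Rightarrow> a \<in> carrier M | Inr b \<Rightarrow> b \<in> carrier N)"
definition iz :: "'a + 'b \<Rightarrow> bool" where
  "iz z = (case z of Inl a \<Rightarrow> a = zM | Inr b \<Rightarrow> b = zN)"
definition io :: "'a + 'b \<Rightarrow> bool" where
  "io z = (case z of Inl a \<Rightarrow> a = \<one>\<^bsub>M\<^esub> | Inr b \<Rightarrow> b = \<one>\<^bsub>N\<^esub>)"
definition pr :: "'a + 'b \<Rightarrow> 'a + 'b \<Rightarrow> 'a + 'b" where
  "pr x y = (case (x, y) of (Inl a, Inl b) \<Rightarrow> Inl (a \<otimes>\<^bsub>M\<^esub> b)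
      | (Inr a, Inr b) \<Rightarrow> Inr (a \<otimes>\<^bsub>N\<^esub> b) | _ \<Rightarrow> x)"
definition letter :: "'a + 'b \<Rightarrow> bool" where
  "letter z \<longleftrightarrow> vl z \<and> \<not> iz z \<and> \<not> io z"
definition cns :: "'a + 'b \<Rightarrow> ('a + 'b) list \<Rightarrow> ('a + 'b) list option" where
  "cns z w = (if iz z then None else if io z then Some w else Some (z # w))"
definition rcns :: "('a + 'b) list \<Rightarrow> 'a + 'b \<Rightarrow> ('a + 'b) list option" where
  "rcns w z = (if iz z then None else if io z then Some w else Some (w @ [z]))"
definition act :: "'a + 'b \<Rightarrow> ('a + 'b) list option \<Rightarrow> ('a + 'b) list option" where
  "act z m = (if iz z then None else if io z then m else push z m)"
definition inC :: "('a + 'b) list option \<Rightarrow> bool" where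
  "inC m = (case m of None \<Rightarrow> True | Some w \<Rightarrow> rw w)"

lemma rw_Nil[simp]: "rw []" by (simp add: reduced_word_def)

lemma rw_Cons: "rw (x # w) \<longleftrightarrow> letter x \<and> rw w \<and> (w \<noteq> [] \<longrightarrow> isl (hd w) \<noteq> isl x)"
proof -
  have l: "(case x of Inl a \<Rightarrow> a \<in> carrier M \<and> a \<noteq> zM \<and> a \<noteq> \<one>\<^bsub>M\<^esub>
       | Inr b \<Rightarrow> b \<in> carrier N \<and> b \<noteq> zN \<and> b \<noteq> \<one>\<^bsub>N\<^esub>) = letter x"
    by (auto simp: letter_def vl_def iz_def io_def split: sum.splits)
  have a: "(\<forall>i. Suc i < length (x # w) \<longrightarrow> isl ((x # w) ! i) \<noteq> isl ((x # w) ! Suc i))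
     \<longleftrightarrow> (w \<noteq> [] \<longrightarrow> isl (hd w) \<noteq> isl x) \<and> (\<forall>i. Suc i < length w \<longrightarrow> isl (w ! i) \<noteq> isl (w ! Suc i))"
    (is "?L \<longleftrightarrow> ?R")
  proof
    assume L: ?L
    show ?R
    proof
      show "w \<noteq> [] \<longrightarrow> isl (hd w) \<noteq> isl x" using L[rule_format, of 0] by (cases w) auto
      show "\<forall>i. Suc i < length w \<longrightarrow> isl (w ! i) \<noteq> isl (w ! Suc i)"
        using L by (metis Suc_less_eq length_Cons nth_Cons_Suc)
    qed
  next
    assume R: ?R
    show ?L
    proof (intro allI impI)
      fix i assume "Suc i < length (x # w)"
      then show "isl ((x # w) ! i) \<noteq> isl ((x # w) ! Suc i)"
        using R by (cases i; cases w) (auto simp: hd_conv_nth)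
    qed
  qed
  show ?thesis unfolding reduced_word_def using l a by auto
qed

lemma rw_append: "rw (u @ v) \<longleftrightarrow> rw u \<and> rw v \<and> (u \<noteq> [] \<longrightarrow> v \<noteq> [] \<longrightarrow> isl (last u) \<noteq> isl (hd v))"
  by (induction u) (auto simp: rw_Cons)

lemma push_None[simp]: "push x None = None"
  by (simp add: push_letter_def)
lemma push_Nil[simp]: "push x (Some []) = Some [x]"
  by (simp add: push_letter_def)
lemma push_Cons: "push x (Some (y # w)) = (if isl x = isl y then cns (pr x y) w else Some (x # y # w))"
  by (cases x; cases y) (simp_all add: push_letter_def cns_def pr_def iz_def io_def Let_def)

lemma mult_None[simp]: "fm None v = None" by (simp add: free_prod0_mult_def)
lemma mult_Nil[simp]: "fm (Some []) v = v" by (simp add: free_prod0_mult_def)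
lemma mult_Cons[simp]: "fm (Some (x # w)) v = push x (fm (Some w) v)" by (simp add: free_prod0_mult_def)
lemma mult_rNone0: "fm (Some w) None = None"
  by (induction w) auto
lemma mult_rNone[simp]: "fm t None = None"
  by (cases t) (auto simp: mult_rNone0)

lemma pr_props:
  assumes "vl x" "vl y" "isl x = isl y"
  shows "vl (pr x y)" "isl (pr x y) = isl x"
    "iz x \<Longrightarrow> iz (pr x y)" "iz y \<Longrightarrow> iz (pr x y)"
    "io x \<Longrightarrow> pr x y = y" "io y \<Longrightarrow> pr x y = x"
  using assms mM mN zMl zMr zNl zNr
  by (cases x; cases y; auto simp: vl_def iz_def io_def pr_def monoid.m_closed monoid.l_one monoid.r_one)+

lemma pr_assoc:
  assumes "vl x" "vl y" "vl z" "isl x = isl y" "isl y = isl z"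
  shows "pr (pr x y) z = pr x (pr y z)"
  using assms mM mN
  by (cases x; cases y; cases z; auto simp: vl_def pr_def monoid.m_closed monoid.m_assoc)

lemma io_eq: "vl x \<Longrightarrow> vl y \<Longrightarrow> isl x = isl y \<Longrightarrow> io x \<Longrightarrow> io y \<Longrightarrow> x = y"
  by (cases x; cases y; auto simp: io_def)

lemma pr_lcancel:
  assumes "zero_left_cancel M zM" "zero_left_cancel N zN"
    "vl x" "vl y" "vl y'" "isl x = isl y" "isl x = isl y'" "pr x y = pr x y'" "\<not> iz (pr x y)"
  shows "y = y'"
proof -
  have c1: "\<And>s t r. s \<in> carrier M \<Longrightarrow> t \<in> carrier M \<Longrightarrow> r \<in> carrier M \<Longrightarrow> s \<otimes>\<^bsub>M\<^esub> t = s \<otimes>\<^bsub>M\<^esub> r \<Longrightarrow> s \<otimes>\<^bsub>M\<^esub> t \<noteq> zM \<Longrightarrow> t = r"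
    using assms(1) unfolding zero_left_cancel_def by blast
  have c2: "\<And>s t r. s \<in> carrier N \<Longrightarrow> t \<in> carrier N \<Longrightarrow> r \<in> carrier N \<Longrightarrow> s \<otimes>\<^bsub>N\<^esub> t = s \<otimes>\<^bsub>N\<^esub> r \<Longrightarrow> s \<otimes>\<^bsub>N\<^esub> t \<noteq> zN \<Longrightarrow> t = r"
    using assms(2) unfolding zero_left_cancel_def by blast
  show ?thesis
    using assms(3-) by (cases x; cases y; cases y'; simp add: vl_def pr_def iz_def; metis c1 c2)
qed

lemma pr_rcancel:
  assumes "zero_right_cancel M zM" "zero_right_cancel N zN"
    "vl x" "vl y" "vl y'" "isl x = isl y" "isl x = isl y'" "pr y x = pr y' x" "\<not> iz (pr y x)"
  shows "y = y'"
proof -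
  have c1: "\<And>s t r. s \<in> carrier M \<Longrightarrow> t \<in> carrier M \<Longrightarrow> r \<in> carrier M \<Longrightarrow> t \<otimes>\<^bsub>M\<^esub> s = r \<otimes>\<^bsub>M\<^esub> s \<Longrightarrow> t \<otimes>\<^bsub>M\<^esub> s \<noteq> zM \<Longrightarrow> t = r"
    using assms(1) unfolding zero_right_cancel_def by blast
  have c2: "\<And>s t r. s \<in> carrier N \<Longrightarrow> t \<in> carrier N \<Longrightarrow> r \<in> carrier N \<Longrightarrow> t \<otimes>\<^bsub>N\<^esub> s = r \<otimes>\<^bsub>N\<^esub> s \<Longrightarrow> t \<otimes>\<^bsub>N\<^esub> s \<noteq> zN \<Longrightarrow> t = r"
    using assms(2) unfolding zero_right_cancel_def by blast
  show ?thesis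
    using assms(3-) by (cases x; cases y; cases y'; simp add: vl_def pr_def iz_def; metis c1 c2)
qed

definition one :: "bool \<Rightarrow> 'a + 'b" where "one s = (if s then Inl \<one>\<^bsub>M\<^esub> else Inr \<one>\<^bsub>N\<^esub>)"
definition zero :: "bool \<Rightarrow> 'a + 'b" where "zero s = (if s then Inl zM else Inr zN)"

lemma one_props: "vl (one s)" "isl (one s) = s" "io (one s)" "\<not> iz (one s)"
  using mM mN zM1 zN1 by (auto simp: one_def vl_def io_def iz_def monoid.one_closed)
lemma zero_props: "vl (zero s)" "isl (zero s) = s" "iz (zero s)"
  using zMc zNc by (auto simp: zero_def vl_def iz_def)

lemma decomp:
  assumes "inC m"
  shows "\<exists>d w. vl d \<and> isl d = s \<and> rw w \<and> (w = [] \<or> isl (hd w) \<noteq> s) \<and> m = cns d w"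
proof (cases m)
  case None
  then show ?thesis using zero_props[of s] by (intro exI[of _ "zero s"] exI[of _ "[]"]) (auto simp: cns_def)
next
  case (Some w)
  then have rw: "rw w" using assms by (simp add: inC_def)
  show ?thesis
  proof (cases "w = [] \<or> isl (hd w) \<noteq> s")
    case True
    then show ?thesis using one_props[of s] rw Some
      by (intro exI[of _ "one s"] exI[of _ w]) (auto simp: cns_def)
  next
    case False
    then obtain d w' where w: "w = d # w'" "isl d = s" by (cases w) auto
    then show ?thesis using rw Some
      by (intro exI[of _ d] exI[of _ w']) (auto simp: cns_def rw_Cons letter_def)
  qed
qed

lemma rw_snoc: "rw (w @ [x]) \<longleftrightarrow> rw w \<and> letter x \<and> (w \<noteq> [] \<longrightarrow> isl (last w) \<noteq> isl x)"
  by (auto simp: rw_append rw_Cons)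

lemma rdecomp:
  assumes "rw w0"
  shows "\<exists>d w. vl d \<and> isl d = s \<and> rw w \<and> (w = [] \<or> isl (last w) \<noteq> s) \<and> Some w0 = rcns w d"
proof (cases "w0 = [] \<or> isl (last w0) \<noteq> s")
  case True
  then show ?thesis using one_props[of s] assms
    by (intro exI[of _ "one s"] exI[of _ w0]) (auto simp: rcns_def)
next
  case False
  then obtain d w' where w: "w0 = w' @ [d]" "isl d = s" by (cases w0 rule: rev_cases) auto
  then show ?thesis using assms
    by (intro exI[of _ d] exI[of _ w']) (auto simp: rcns_def rw_snoc letter_def)
qed

lemma act_None[simp]: "act z None = None" by (simp add: act_def)

lemma K:
  assumes "vl y" "vl d" "isl y = isl d" "rw w" "w = [] \<or> isl (hd w) \<noteq> isl d"
  shows "act y (cns d w) = cns (pr y d) w"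
proof -
  note p = pr_props[OF assms(1-3)]
  consider "iz d" | "\<not> iz d" "io d" | "\<not> iz d" "\<not> io d" by blast
  then show ?thesis
  proof cases
    case 1 then show ?thesis using p by (simp add: cns_def)
  next
    case 2
    then have e: "pr y d = y" using p by simp
    show ?thesis using 2 assms(3,5) unfolding e
      by (cases w) (auto simp: act_def cns_def push_Cons)
  next
    case 3
    then have c: "cns d w = Some (d # w)" by (simp add: cns_def)
    consider "iz y" | "\<not> iz y" "io y" | "\<not> iz y" "\<not> io y" by blast
    then show ?thesis
    proof cases
      case 1 then show ?thesis using p c by (simp add: cns_def act_def)
    next
      case 2 then show ?thesis using p c 3 by (simp add: cns_def act_def)
    next
      case 3 then show ?thesis using c assms(3) by (simp add: act_def push_Cons)
    qed
  qed
qed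


lemma comp:
  assumes "vl x" "vl y" "isl x = isl y" "inC m"
  shows "act x (act y m) = act (pr x y) m"
proof -
  obtain d w where d: "vl d" "isl d = isl x" "rw w" "w = [] \<or> isl (hd w) \<noteq> isl x" "m = cns d w"
    using decomp[OF assms(4), of "isl x"] by blast
  have py: "vl (pr y d)" "isl (pr y d) = isl d" using pr_props[of y d] assms d by auto
  have pxy: "vl (pr x y)" "isl (pr x y) = isl d" using pr_props[of x y] assms d by auto
  have s: "isl y = isl d" "isl x = isl d" using assms d by auto
  have h: "w = [] \<or> isl (hd w) \<noteq> isl d" using d by auto
  have h2: "w = [] \<or> isl (hd w) \<noteq> isl (pr y d)" using h py(2) by (simp only:)
  have s2: "isl x = isl (pr y d)" using s py(2) by (simp only:)
  have k1: "act y (cns d w) = cns (pr y d) w" using K[OF assms(2) d(1) s(1) d(3) h] .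
  have k2: "act x (cns (pr y d) w) = cns (pr x (pr y d)) w" using K[OF assms(1) py(1) s2 d(3) h2] .
  have k3: "act (pr x y) (cns d w) = cns (pr (pr x y) d) w" using K[OF pxy(1) d(1) pxy(2) d(3) h] .
  have a: "pr (pr x y) d = pr x (pr y d)" using pr_assoc[OF assms(1,2) d(1) assms(3) s(1)] .
  show ?thesis unfolding d(5) k1 k2 k3 a ..
qed

lemma push_act: "letter x \<Longrightarrow> push x m = act x m"
  by (simp add: act_def letter_def)

lemma inC_cns: "vl z \<Longrightarrow> rw w \<Longrightarrow> w = [] \<or> isl (hd w) \<noteq> isl z \<Longrightarrow> inC (cns z w)"
  by (auto simp: cns_def inC_def rw_Cons letter_def)

lemma inC_push: assumes "letter x" "inC m" shows "inC (push x m)"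
proof -
  obtain d w where d: "vl d" "isl d = isl x" "rw w" "w = [] \<or> isl (hd w) \<noteq> isl x" "m = cns d w"
    using decomp[OF assms(2), of "isl x"] by blast
  have v: "vl x" using assms by (simp add: letter_def)
  have "push x m = cns (pr x d) w" using push_act[OF assms(1)] K[of x d w] v d by simp
  then show ?thesis using inC_cns[of "pr x d" w] pr_props[of x d] v d by simp
qed

lemma inC_fm0: "rw w \<Longrightarrow> inC u \<Longrightarrow> inC (fm (Some w) u)"
  by (induction w) (auto simp: rw_Cons intro: inC_push)

lemma inC_fm: "inC t \<Longrightarrow> inC u \<Longrightarrow> inC (fm t u)"
  using inC_fm0 by (cases t) (auto simp: inC_def)

lemma fm_cns: "fm (cns c w) v = act c (fm (Some w) v)"
  by (simp add: cns_def act_def)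

lemma L:
  assumes "letter x" "rw u" "inC v"
  shows "fm (push x (Some u)) v = push x (fm (Some u) v)"
proof (cases u)
  case Nil then show ?thesis by simp
next
  case (Cons y w)
  have y: "letter y" "rw w" using assms(2) Cons by (auto simp: rw_Cons)
  have i: "inC (fm (Some w) v)" using inC_fm0 y assms by blast
  show ?thesis
  proof (cases "isl x = isl y")
    case True
    have "fm (push x (Some u)) v = act (pr x y) (fm (Some w) v)" using Cons True by (simp add: push_Cons fm_cns)
    also have "\<dots> = act x (act y (fm (Some w) v))" using comp[of x y] assms(1) y True i by (simp add: letter_def)
    finally show ?thesis using Cons assms(1) y by (simp add: push_act)
  next
    case False then show ?thesis using Cons by (simp add: push_Cons)
  qed
qed

lemma assoc0:
  assumes "rw w" "inC u" "inC v"
  shows "fm (fm (Some w) u) v = fm (Some w) (fm u v)"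
  using assms(1)
proof (induction w)
  case Nil then show ?case by simp
next
  case (Cons x w)
  then have x: "letter x" "rw w" by (auto simp: rw_Cons)
  then have IH: "fm (fm (Some w) u) v = fm (Some w) (fm u v)" using Cons by blast
  show ?case
  proof (cases "fm (Some w) u")
    case None then show ?thesis using IH by simp
  next
    case (Some p)
    have "rw p" using inC_fm0[OF x(2) assms(2)] Some by (simp add: inC_def)
    then show ?thesis using L[OF x(1) _ assms(3)] Some IH by simp
  qed
qed

lemma assoc: "inC t \<Longrightarrow> inC u \<Longrightarrow> inC v \<Longrightarrow> fm (fm t u) v = fm t (fm u v)"
  by (cases t) (auto simp: inC_def assoc0)

lemma cns_inj:
  assumes "vl z" "vl z'" "isl z = isl z'" "w = [] \<or> isl (hd w) \<noteq> isl z"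
    "w' = [] \<or> isl (hd w') \<noteq> isl z" "cns z w = cns z' w'" "cns z w \<noteq> None"
  shows "z = z' \<and> w = w'"
  using assms io_eq[of z z'] by (auto simp: cns_def split: if_splits)

lemma push_inj:
  assumes lc: "zero_left_cancel M zM" "zero_left_cancel N zN"
    and "letter x" "inC A" "inC B" "push x A = push x B" "push x A \<noteq> None"
  shows "A = B"
proof -
  obtain d w where d: "vl d" "isl d = isl x" "rw w" "w = [] \<or> isl (hd w) \<noteq> isl x" "A = cns d w"
    using decomp[OF assms(4), of "isl x"] by blast
  obtain d' w' where d': "vl d'" "isl d' = isl x" "rw w'" "w' = [] \<or> isl (hd w') \<noteq> isl x" "B = cns d' w'"
    using decomp[OF assms(5), of "isl x"] by blast
  have v: "vl x" using assms by (simp add: letter_def)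
  have s: "isl x = isl d" "isl x = isl d'" using d d' by simp_all
  have h: "w = [] \<or> isl (hd w) \<noteq> isl d" using d by simp
  have h': "w' = [] \<or> isl (hd w') \<noteq> isl d'" using d' by simp
  have 1: "push x A = cns (pr x d) w" unfolding d(5) push_act[OF assms(3)] using K[OF v d(1) s(1) d(3) h] .
  have 2: "push x B = cns (pr x d') w'" unfolding d'(5) push_act[OF assms(3)] using K[OF v d'(1) s(2) d'(3) h'] .
  have pd: "vl (pr x d)" "isl (pr x d) = isl x" using pr_props[OF v d(1) s(1)] by auto
  have pd': "vl (pr x d')" "isl (pr x d') = isl x" using pr_props[OF v d'(1) s(2)] by auto
  have 3: "cns (pr x d) w = cns (pr x d') w'" "cns (pr x d) w \<noteq> None"
    using 1 2 assms(6,7) by simp_all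
  have si: "isl (pr x d) = isl (pr x d')" using pd pd' by simp
  have hw: "w = [] \<or> isl (hd w) \<noteq> isl (pr x d)" using d(4) pd(2) by simp
  have hw': "w' = [] \<or> isl (hd w') \<noteq> isl (pr x d)" using d'(4) pd(2) by simp
  have e: "pr x d = pr x d' \<and> w = w'" using cns_inj[OF pd(1) pd'(1) si hw hw' 3] .
  have niz: "\<not> iz (pr x d)" using 3(2) unfolding cns_def by (auto split: if_splits)
  have "d = d'" using pr_lcancel[OF lc v d(1) d'(1) s(1) s(2) conjunct1[OF e] niz] .
  then show ?thesis unfolding d(5) d'(5) using conjunct2[OF e] by (simp only:)
qed

lemma lcancel0:
  assumes lc: "zero_left_cancel M zM" "zero_left_cancel N zN"
    and "rw w" "inC t" "inC r" "fm (Some w) t = fm (Some w) r" "fm (Some w) t \<noteq> None"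
  shows "t = r"
  using assms(3-)
proof (induction w)
  case Nil then show ?case by simp
next
  case (Cons x w)
  then have x: "letter x" "rw w" by (auto simp: rw_Cons)
  have "fm (Some w) t = fm (Some w) r"
    using push_inj[OF lc x(1) inC_fm0[OF x(2) Cons.prems(2)] inC_fm0[OF x(2) Cons.prems(3)]] Cons.prems by simp
  moreover have "fm (Some w) t \<noteq> None"
  proof
    assume "fm (Some w) t = None"
    then have "fm (Some (x # w)) t = None" by simp
    then show False using Cons.prems(5) by simp
  qed
  ultimately show ?case by (rule Cons.IH[OF x(2) Cons.prems(2,3)])
qed

lemma concat: "rw (w0 @ v) \<Longrightarrow> fm (Some w0) (Some v) = Some (w0 @ v)"
proof (induction w0)
  case Nil then show ?case by simp
next
  case (Cons x w)
  then have "fm (Some w) (Some v) = Some (w @ v)" by (simp add: rw_Cons)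
  then show ?case using Cons.prems by (cases "w @ v") (auto simp: push_Cons rw_Cons)
qed

lemma rcns_inj:
  assumes "vl z" "vl z'" "isl z = isl z'" "w = [] \<or> isl (last w) \<noteq> isl z"
    "w' = [] \<or> isl (last w') \<noteq> isl z" "rcns w z = rcns w' z'" "rcns w z \<noteq> None"
  shows "z = z' \<and> w = w'"
  using assms io_eq[of z z'] by (auto simp: rcns_def split: if_splits)

lemma fm_snoc:
  assumes "letter y" "vl d" "isl d = isl y" "rw w0" "w0 = [] \<or> isl (last w0) \<noteq> isl y"
  shows "fm (rcns w0 d) (Some [y]) = rcns w0 (pr d y)"
proof -
  have vy: "vl y" using assms by (simp add: letter_def)
  note p = pr_props[OF assms(2) vy assms(3)]
  consider "iz d" | "\<not> iz d" "io d" | "\<not> iz d" "\<not> io d" by blast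
  then show ?thesis
  proof cases
    case 1 then show ?thesis using p by (simp add: rcns_def)
  next
    case 2
    have "rw (w0 @ [y])" using assms by (auto simp: rw_snoc)
    then show ?thesis using 2 p concat[of w0 "[y]"] assms(1) by (simp add: rcns_def letter_def)
  next
    case 3
    have "fm (rcns w0 d) (Some [y]) = fm (Some w0) (push d (Some [y]))"
      using 3 by (simp add: rcns_def free_prod0_mult_def)
    also have "\<dots> = fm (Some w0) (cns (pr d y) [])" using assms(3) by (simp add: push_Cons)
    also have "\<dots> = rcns w0 (pr d y)"
    proof -
      have a: "rw (w0 @ [])" using assms by simp
      have b: "\<not> iz (pr d y) \<Longrightarrow> \<not> io (pr d y) \<Longrightarrow> rw (w0 @ [pr d y])"
        using assms p by (auto simp: rw_snoc letter_def)
      show ?thesis using concat[OF a] concat[OF b] by (auto simp: cns_def rcns_def)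
    qed
    finally show ?thesis .
  qed
qed

lemma rcancel_letter:
  assumes rc: "zero_right_cancel M zM" "zero_right_cancel N zN"
    and "letter y" "inC t" "inC r" "fm t (Some [y]) = fm r (Some [y])" "fm t (Some [y]) \<noteq> None"
  shows "t = r"
proof -
  obtain w1 where t: "t = Some w1" "rw w1" using assms(4,7) by (cases t) (auto simp: inC_def)
  obtain w2 where r: "r = Some w2" "rw w2" using assms(5,6,7) by (cases r) (auto simp: inC_def)
  obtain d w where d: "vl d" "isl d = isl y" "rw w" "w = [] \<or> isl (last w) \<noteq> isl y" "Some w1 = rcns w d"
    using rdecomp[OF t(2), of "isl y"] by blast
  obtain d' w' where d': "vl d'" "isl d' = isl y" "rw w'" "w' = [] \<or> isl (last w') \<noteq> isl y" "Some w2 = rcns w' d'"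
    using rdecomp[OF r(2), of "isl y"] by blast
  have v: "vl y" using assms by (simp add: letter_def)
  have 1: "fm t (Some [y]) = rcns w (pr d y)" using t d fm_snoc[OF assms(3) d(1-4)] by simp
  have 2: "fm r (Some [y]) = rcns w' (pr d' y)" using r d' fm_snoc[OF assms(3) d'(1-4)] by simp
  have pd: "vl (pr d y)" "isl (pr d y) = isl y" using pr_props[of d y] v d by auto
  have pd': "vl (pr d' y)" "isl (pr d' y) = isl y" using pr_props[of d' y] v d' by auto
  have 3: "rcns w (pr d y) = rcns w' (pr d' y)" "rcns w (pr d y) \<noteq> None"
    using 1 2 assms(6,7) by simp_all
  have si: "isl (pr d y) = isl (pr d' y)" using pd pd' by simp
  have hw: "w = [] \<or> isl (last w) \<noteq> isl (pr d y)" using d(4) pd(2) by simp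
  have hw': "w' = [] \<or> isl (last w') \<noteq> isl (pr d y)" using d'(4) pd(2) by simp
  have e: "pr d y = pr d' y \<and> w = w'" using rcns_inj[OF pd(1) pd'(1) si hw hw' 3] .
  have niz: "\<not> iz (pr d y)" using 3(2) unfolding rcns_def by (auto split: if_splits)
  have s: "isl y = isl d" "isl y = isl d'" using d d' by simp_all
  have "d = d'" using pr_rcancel[OF rc v d(1) d'(1) s(1) s(2) conjunct1[OF e] niz] .
  then have "Some w1 = Some w2" unfolding d(5) d'(5) using conjunct2[OF e] by (simp only:)
  then show ?thesis using t(1) r(1) by simp
qed

lemma rid: "inC t \<Longrightarrow> fm t (Some []) = t"
  using concat[of _ "[]"] by (cases t) (auto simp: inC_def)

lemma rcancel0:
  assumes rc: "zero_right_cancel M zM" "zero_right_cancel N zN"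
    and "rw v" "inC t" "inC r" "fm t (Some v) = fm r (Some v)" "fm t (Some v) \<noteq> None"
  shows "t = r"
  using assms(3-)
proof (induction v arbitrary: t r)
  case Nil then show ?case by (simp add: rid)
next
  case (Cons y v)
  then have y: "letter y" "rw v" by (auto simp: rw_Cons)
  have sy: "inC (Some [y])" "inC (Some v)" using y by (auto simp: inC_def rw_Cons)
  have e: "Some (y # v) = fm (Some [y]) (Some v)"
    using Cons.prems(1) by (cases v) (auto simp: push_Cons rw_Cons)
  have a1: "fm t (Some (y # v)) = fm (fm t (Some [y])) (Some v)"
    unfolding e using assoc[OF Cons.prems(2) sy] by simp
  have a2: "fm r (Some (y # v)) = fm (fm r (Some [y])) (Some v)"
    unfolding e using assoc[OF Cons.prems(3) sy] by simp
  have it: "inC (fm t (Some [y]))" "inC (fm r (Some [y]))"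
    using inC_fm sy Cons.prems by blast+
  have "fm t (Some [y]) = fm r (Some [y])"
    using Cons.IH[OF y(2) it] a1 a2 Cons.prems by simp
  moreover have "fm t (Some [y]) \<noteq> None"
  proof
    assume "fm t (Some [y]) = None"
    then have "fm t (Some (y # v)) = None" using a1 by simp
    then show False using Cons.prems(5) by simp
  qed
  ultimately show ?case using rcancel_letter[OF rc y(1) Cons.prems(2,3)] by blast
qed

lemma carrier_fp: "m \<in> carrier (free_prod0 M zM N zN) \<longleftrightarrow> inC m"
  by (cases m) (auto simp: free_prod0_def inC_def)

lemma mult_fp: "mult (free_prod0 M zM N zN) = fm"
  by (simp add: free_prod0_def)

lemma main:
  "(zero_left_cancel M zM \<and> zero_left_cancel N zN
            \<longrightarrow> zero_left_cancel (free_prod0 M zM N zN) None)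
       \<and> (zero_right_cancel M zM \<and> zero_right_cancel N zN
            \<longrightarrow> zero_right_cancel (free_prod0 M zM N zN) None)"
proof (intro conjI impI)
  assume "zero_left_cancel M zM \<and> zero_left_cancel N zN"
  then have lc: "zero_left_cancel M zM" "zero_left_cancel N zN" by auto
  show "zero_left_cancel (free_prod0 M zM N zN) None"
    unfolding zero_left_cancel_def Ball_def carrier_fp mult_fp
  proof (intro allI impI)
    fix s t r assume a: "inC s" "inC t" "inC r" "fm s t = fm s r \<and> fm s t \<noteq> None"
    then obtain w where sw: "s = Some w" "rw w" by (cases s) (auto simp: inC_def)
    show "t = r" using lcancel0[OF lc sw(2) a(2) a(3)] a(4) unfolding sw(1) by blast
  qed
next
  assume "zero_right_cancel M zM \<and> zero_right_cancel N zN"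
  then have rc: "zero_right_cancel M zM" "zero_right_cancel N zN" by auto
  show "zero_right_cancel (free_prod0 M zM N zN) None"
    unfolding zero_right_cancel_def Ball_def carrier_fp mult_fp
  proof (intro allI impI)
    fix s t r assume a: "inC s" "inC t" "inC r" "fm t s = fm r s \<and> fm t s \<noteq> None"
    then obtain w where sw: "s = Some w" "rw w" by (cases s) (auto simp: inC_def)
    show "t = r" using rcancel0[OF rc sw(2) a(2) a(3)] a(4) unfolding sw(1) by blast
  qed
qed

end

theorem theorem9p3:
  fixes M :: "('a, 'm) monoid_scheme" and N :: "('b, 'n) monoid_scheme"
    and zM :: 'a and zN :: 'b
  assumes "monoid0 M zM" and "monoid0 N zN"
    and "nontrivial0 M zM" and "nontrivial0 N zN"
  shows "(zero_left_cancel M zM \<and> zero_left_cancel N zN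
            \<longrightarrow> zero_left_cancel (free_prod0 M zM N zN) None)
       \<and> (zero_right_cancel M zM \<and> zero_right_cancel N zN
            \<longrightarrow> zero_right_cancel (free_prod0 M zM N zN) None)"
proof -
  interpret fp0 M zM N zN using assms by (simp add: fp0_def)
  show ?thesis by (rule main)
qed

end
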